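(* Let $X\subseteq\mathbb{R}^n$ be nonempty, closed and convex; let $F:X\to\mathbb{R}^n$ be $L_F$-Lipschitz continuous and monotone on $X$; let $H:X\to\mathbb{R}^n$ be $L_H$-Lipschitz continuous and monotone on $X$; and assume $\mathrm{SOL}(\mathrm{SOL}(X,F),H)\neq\emptyset$. Let $\gamma>0$, let $\{\eta_k\}$ be positive scalars, let $x_0\in X$, and for $k\ge0$ define $y_{k+1}=\Pi_X[x_k-\gamma(F(x_k)+\eta_kH(x_k))]$, $x_{k+1}=\Pi_X[x_k-\gamma(F(y_{k+1})+\eta_kH(y_{k+1}))]$. Then for any $x\in X$: (i) For all $k\ge0$, $\|x_{k+1}-x\|^2\le\|x_k-x\|^2-\|y_{k+1}-x_k\|^2+2\gamma^2(L_F^2+\eta_k^2L_H^2)\|y_{k+1}-x_k\|^2+2\gamma(F(y_{k+1})+\eta_kH(y_{k+1}))^\top(x-y_{k+1})$. (ii) If $\gamma^2(L_F^2+\eta_k^2L_H^2)\le0.5$ for all $k\ge0$, then for all $k\ge0$, $2\gamma(F(x)+\eta_kH(x))^\top(y_{k+1}-x)\le\|x_k-x\|^2-\|x_{k+1}-x\|^2$. (iii) If $\gamma^2(L_F^2+\eta_k^2L_H^2)\le0.5$ for all $k\ge0$ and moreover $H=\nabla f$ where $f$ is convex and $L$-smooth, then for all $k\ge0$, $2\gamma F(x)^\top(y_{k+1}-x)+2\gamma\eta_k(f(y_{k+1})-f(x))\le\|x_k-x\|^2-\|x_{k+1}-x\|^2$.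
   Context: $\mathrm{SOL}(Y,G)=\{x\in Y: G(x)^\top(y-x)\ge0\ \forall y\in Y\}$; $\Pi_X$ is the Euclidean projection onto $X$. $L$-smooth means continuously differentiable with $L$-Lipschitz gradient (in (iii), $L_H=L$). *)

theory Defs
  imports "HOL-Analysis.Analysis"
begin

definition SOL :: "'a::real_inner set \<Rightarrow> ('a \<Rightarrow> 'a) \<Rightarrow> 'a set" where
  "SOL Y G = {x \<in> Y. \<forall>y\<in>Y. G x \<bullet> (y - x) \<ge> 0}"

definition monotone_op :: "'a::real_inner set \<Rightarrow> ('a \<Rightarrow> 'a) \<Rightarrow> bool" where
  "monotone_op X G \<longleftrightarrow> (\<forall>x\<in>X. \<forall>y\<in>X. (G x - G y) \<bullet> (x - y) \<ge> 0)"

end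

theory Submission
  imports Defs
begin

lemma proj_ineq:
  fixes X :: "'a::euclidean_space set"
  assumes "closed X" "convex X" "X \<noteq> {}" "z \<in> X"
  shows "(norm (closest_point X u - z))\<^sup>2 \<le> (norm (u - z))\<^sup>2 - (norm (u - closest_point X u))\<^sup>2"
proof -
  define p where "p = closest_point X u"
  have d: "(u - p) \<bullet> (z - p) \<le> 0" using closest_point_dot[OF assms(2,1,4)] p_def by simp
  have "(norm (u - z))\<^sup>2 = (norm (u - p))\<^sup>2 + (norm (p - z))\<^sup>2 - 2 * ((u - p) \<bullet> (z - p))"
    by (simp add: power2_norm_eq_inner inner_diff_left inner_diff_right inner_commute algebra_simps)
  with d show ?thesis unfolding p_def[symmetric] by linarith
qed

lemma tangent_ineq:
  fixes f :: "'a::euclidean_space \<Rightarrow> real"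
  assumes cv: "convex_on UNIV f" and der: "(f has_derivative (\<lambda>h. G \<bullet> h)) (at y)"
  shows "G \<bullet> (z - y) \<le> f z - f y"
proof -
  define d where "d = z - y"
  define \<phi> where "\<phi> = (\<lambda>t::real. f (y + t *\<^sub>R d))"
  have cphi: "convex_on UNIV \<phi>"
  proof (rule convex_onI)
    fix t s r :: real assume "0 < t" "t < 1"
    have "y + ((1 - t) *\<^sub>R s + t *\<^sub>R r) *\<^sub>R d = (1 - t) *\<^sub>R (y + s *\<^sub>R d) + t *\<^sub>R (y + r *\<^sub>R d)"
      by (simp add: algebra_simps)
    then show "\<phi> ((1 - t) *\<^sub>R s + t *\<^sub>R r) \<le> (1 - t) * \<phi> s + t * \<phi> r"
      unfolding \<phi>_def using convex_onD[OF cv, of t "y + s *\<^sub>R d" "y + r *\<^sub>R d"] \<open>0<t\<close> \<open>t<1\<close>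
      by simp
  qed simp
  have l: "((\<lambda>t::real. y + t *\<^sub>R d) has_derivative (\<lambda>t. t *\<^sub>R d)) (at 0)"
    by (auto intro!: derivative_eq_intros)
  have der0: "(f has_derivative (\<lambda>h. G \<bullet> h)) (at (y + 0 *\<^sub>R d))" using der by simp
  have "(\<phi> has_derivative (\<lambda>t. G \<bullet> (t *\<^sub>R d))) (at 0)"
    unfolding \<phi>_def using has_derivative_compose[OF l der0] by (simp add: o_def)
  moreover have "(\<lambda>t. G \<bullet> (t *\<^sub>R d)) = (*) (G \<bullet> d)" by (auto simp: fun_eq_iff)
  ultimately have "(\<phi> has_field_derivative (G \<bullet> d)) (at 0 within UNIV)"
    by (simp add: has_field_derivative_def)
  from convex_on_imp_above_tangent[OF cphi _ _ _ this, of 1] have "\<phi> 1 - \<phi> 0 \<ge> G \<bullet> d" by simp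
  then show ?thesis unfolding \<phi>_def d_def by simp
qed

lemma step_ineq:
  fixes a b c z g1 g2 :: "'a::euclidean_space" and \<gamma> :: real
  assumes P1: "(a - \<gamma> *\<^sub>R g2 - c) \<bullet> (z - c) \<le> 0"
    and P2: "(a - \<gamma> *\<^sub>R g1 - b) \<bullet> (c - b) \<le> 0"
  shows "(norm (c - z))\<^sup>2 \<le> (norm (a - z))\<^sup>2 - (norm (b - a))\<^sup>2 - (norm (c - b))\<^sup>2
     + 2 * \<gamma> * ((g1 - g2) \<bullet> (c - b)) + 2 * \<gamma> * (g2 \<bullet> (z - b))"
proof -
  have "(norm (c - z))\<^sup>2 - ((norm (a - z))\<^sup>2 - (norm (b - a))\<^sup>2 - (norm (c - b))\<^sup>2
     + 2 * \<gamma> * ((g1 - g2) \<bullet> (c - b)) + 2 * \<gamma> * (g2 \<bullet> (z - b)))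
     = 2 * ((a - \<gamma> *\<^sub>R g2 - c) \<bullet> (z - c)) + 2 * ((a - \<gamma> *\<^sub>R g1 - b) \<bullet> (c - b))"
    by (simp add: power2_norm_eq_inner inner_diff_left inner_diff_right inner_commute algebra_simps)
  with P1 P2 show ?thesis by linarith
qed

theorem lemma3p3:
  fixes X :: "'a::euclidean_space set"
    and F H :: "'a \<Rightarrow> 'a" and f :: "'a \<Rightarrow> real"
    and LF LH \<gamma> :: real and \<eta> :: "nat \<Rightarrow> real"
    and x y :: "nat \<Rightarrow> 'a"
  assumes X: "X \<noteq> {}" "closed X" "convex X"
    and F: "lipschitz_on LF X F" "monotone_op X F"
    and H: "lipschitz_on LH X H" "monotone_op X H"
    and sol: "SOL (SOL X F) H \<noteq> {}"
    and gam: "\<gamma> > 0"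
    and eta: "\<And>k. \<eta> k > 0"
    and x0: "x 0 \<in> X"
    and ystep: "\<And>k. y (Suc k) = closest_point X (x k - \<gamma> *\<^sub>R (F (x k) + \<eta> k *\<^sub>R H (x k)))"
    and xstep: "\<And>k. x (Suc k) = closest_point X (x k - \<gamma> *\<^sub>R (F (y (Suc k)) + \<eta> k *\<^sub>R H (y (Suc k))))"
  shows "\<forall>z\<in>X.
     (\<forall>k. (norm (x (Suc k) - z))\<^sup>2 \<le> (norm (x k - z))\<^sup>2 - (norm (y (Suc k) - x k))\<^sup>2
            + 2 * \<gamma>\<^sup>2 * (LF\<^sup>2 + (\<eta> k)\<^sup>2 * LH\<^sup>2) * (norm (y (Suc k) - x k))\<^sup>2
            + 2 * \<gamma> * ((F (y (Suc k)) + \<eta> k *\<^sub>R H (y (Suc k))) \<bullet> (z - y (Suc k))))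
   \<and> ((\<forall>k. \<gamma>\<^sup>2 * (LF\<^sup>2 + (\<eta> k)\<^sup>2 * LH\<^sup>2) \<le> 1/2) \<longrightarrow>
        (\<forall>k. 2 * \<gamma> * ((F z + \<eta> k *\<^sub>R H z) \<bullet> (y (Suc k) - z))
               \<le> (norm (x k - z))\<^sup>2 - (norm (x (Suc k) - z))\<^sup>2))
   \<and> ((\<forall>k. \<gamma>\<^sup>2 * (LF\<^sup>2 + (\<eta> k)\<^sup>2 * LH\<^sup>2) \<le> 1/2)
        \<and> convex_on UNIV f
        \<and> (\<forall>w. (f has_derivative (\<lambda>h. H w \<bullet> h)) (at w))
        \<and> continuous_on UNIV H
        \<and> lipschitz_on LH UNIV H \<longrightarrow>
        (\<forall>k. 2 * \<gamma> * (F z \<bullet> (y (Suc k) - z)) + 2 * \<gamma> * \<eta> k * (f (y (Suc k)) - f z)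
               \<le> (norm (x k - z))\<^sup>2 - (norm (x (Suc k) - z))\<^sup>2))"
proof -
  define g where "g = (\<lambda>k w. F w + \<eta> k *\<^sub>R H w)"
  have xX: "x k \<in> X" for k
    by (cases k) (use x0 X in \<open>auto simp: xstep closest_point_in_set\<close>)
  have yX: "y (Suc k) \<in> X" for k
    using X by (simp add: ystep closest_point_in_set)
  have LF0: "LF \<ge> 0" using lipschitz_on_nonneg[OF F(1)] .
  have LH0: "LH \<ge> 0" using lipschitz_on_nonneg[OF H(1)] .
  have lip: "(norm (g k a - g k b))\<^sup>2 \<le> 2 * (LF\<^sup>2 + (\<eta> k)\<^sup>2 * LH\<^sup>2) * (norm (b - a))\<^sup>2"
    if "a \<in> X" "b \<in> X" for k a b
  proof -
    have e: "\<eta> k > 0" by (rule eta)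
    have "norm (g k a - g k b) = norm ((F a - F b) + \<eta> k *\<^sub>R (H a - H b))"
      by (simp add: g_def algebra_simps)
    also have "\<dots> \<le> norm (F a - F b) + \<eta> k * norm (H a - H b)"
      using norm_triangle_ineq[of "F a - F b" "\<eta> k *\<^sub>R (H a - H b)"] e by simp
    also have "\<dots> \<le> LF * norm (b - a) + \<eta> k * (LH * norm (b - a))"
      using lipschitz_onD[OF F(1) that] lipschitz_onD[OF H(1) that] e
      by (intro add_mono mult_left_mono) (auto simp: dist_norm norm_minus_commute)
    finally have n: "norm (g k a - g k b) \<le> (LF + \<eta> k * LH) * norm (b - a)" by (simp add: algebra_simps)
    have "(norm (g k a - g k b))\<^sup>2 \<le> ((LF + \<eta> k * LH) * norm (b - a))\<^sup>2"
      using n by (intro power_mono) auto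
    also have "\<dots> = (LF + \<eta> k * LH)\<^sup>2 * (norm (b - a))\<^sup>2" by (simp add: power_mult_distrib)
    also have "\<dots> \<le> 2 * (LF\<^sup>2 + (\<eta> k)\<^sup>2 * LH\<^sup>2) * (norm (b - a))\<^sup>2"
    proof (rule mult_right_mono)
      have "0 \<le> (LF - \<eta> k * LH)\<^sup>2" by simp
      then show "(LF + \<eta> k * LH)\<^sup>2 \<le> 2 * (LF\<^sup>2 + (\<eta> k)\<^sup>2 * LH\<^sup>2)"
        by (simp add: power2_eq_square algebra_simps)
    qed simp
    finally show ?thesis .
  qed
  have mono_g: "(g k b - g k z) \<bullet> (b - z) \<ge> 0" if "b \<in> X" "z \<in> X" for k b z
  proof -
    have "(F b - F z) \<bullet> (b - z) \<ge> 0" "(H b - H z) \<bullet> (b - z) \<ge> 0"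
      using F(2) H(2) that unfolding monotone_op_def by auto
    moreover have "(g k b - g k z) \<bullet> (b - z) = (F b - F z) \<bullet> (b - z) + \<eta> k * ((H b - H z) \<bullet> (b - z))"
      by (simp add: g_def algebra_simps inner_diff_left inner_add_left)
    ultimately show ?thesis using eta[of k] by simp
  qed
  have part1: "(norm (x (Suc k) - z))\<^sup>2 \<le> (norm (x k - z))\<^sup>2 - (norm (y (Suc k) - x k))\<^sup>2
            + 2 * \<gamma>\<^sup>2 * (LF\<^sup>2 + (\<eta> k)\<^sup>2 * LH\<^sup>2) * (norm (y (Suc k) - x k))\<^sup>2
            + 2 * \<gamma> * ((F (y (Suc k)) + \<eta> k *\<^sub>R H (y (Suc k))) \<bullet> (z - y (Suc k)))"
    if z: "z \<in> X" for z k
  proof -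
    let ?a = "x k" and ?b = "y (Suc k)" and ?c = "x (Suc k)"
    let ?g1 = "g k ?a" and ?g2 = "g k ?b"
    have P1: "(?a - \<gamma> *\<^sub>R ?g2 - ?c) \<bullet> (z - ?c) \<le> 0"
      using closest_point_dot[OF X(3) X(2) z, of "?a - \<gamma> *\<^sub>R ?g2"] by (simp add: xstep g_def)
    have P2: "(?a - \<gamma> *\<^sub>R ?g1 - ?b) \<bullet> (?c - ?b) \<le> 0"
      using closest_point_dot[OF X(3) X(2) xX[of "Suc k"], of "?a - \<gamma> *\<^sub>R ?g1"] by (simp add: ystep g_def)
    have S: "(norm (?c - z))\<^sup>2 \<le> (norm (?a - z))\<^sup>2 - (norm (?b - ?a))\<^sup>2 - (norm (?c - ?b))\<^sup>2
     + 2 * \<gamma> * ((?g1 - ?g2) \<bullet> (?c - ?b)) + 2 * \<gamma> * (?g2 \<bullet> (z - ?b))"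
      by (rule step_ineq[OF P1 P2])
    have "2 * \<gamma> * ((?g1 - ?g2) \<bullet> (?c - ?b)) \<le> 2 * (\<gamma> * norm (?g1 - ?g2)) * norm (?c - ?b)"
      using Cauchy_Schwarz_ineq2[of "?g1 - ?g2" "?c - ?b"] gam by (simp add: mult_left_mono)
    also have "\<dots> \<le> (\<gamma> * norm (?g1 - ?g2))\<^sup>2 + (norm (?c - ?b))\<^sup>2"
      using sum_squares_bound[of "\<gamma> * norm (?g1 - ?g2)" "norm (?c - ?b)"] by simp
    also have "\<dots> = \<gamma>\<^sup>2 * (norm (?g1 - ?g2))\<^sup>2 + (norm (?c - ?b))\<^sup>2" by (simp add: power_mult_distrib)
    also have "\<dots> \<le> \<gamma>\<^sup>2 * (2 * (LF\<^sup>2 + (\<eta> k)\<^sup>2 * LH\<^sup>2) * (norm (?b - ?a))\<^sup>2) + (norm (?c - ?b))\<^sup>2"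
      using lip[OF xX yX, of k k] by (intro add_mono mult_left_mono) auto
    finally have T: "2 * \<gamma> * ((?g1 - ?g2) \<bullet> (?c - ?b)) \<le> \<gamma>\<^sup>2 * (2 * (LF\<^sup>2 + (\<eta> k)\<^sup>2 * LH\<^sup>2) * (norm (?b - ?a))\<^sup>2) + (norm (?c - ?b))\<^sup>2" .
    show ?thesis using S T by (simp add: g_def algebra_simps)
  qed
  have red: "(norm (x (Suc k) - z))\<^sup>2 \<le> (norm (x k - z))\<^sup>2
            + 2 * \<gamma> * ((F (y (Suc k)) + \<eta> k *\<^sub>R H (y (Suc k))) \<bullet> (z - y (Suc k)))"
    if z: "z \<in> X" and c: "\<gamma>\<^sup>2 * (LF\<^sup>2 + (\<eta> k)\<^sup>2 * LH\<^sup>2) \<le> 1/2" for z k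
  proof -
    have "2 * \<gamma>\<^sup>2 * (LF\<^sup>2 + (\<eta> k)\<^sup>2 * LH\<^sup>2) * (norm (y (Suc k) - x k))\<^sup>2 \<le> 1 * (norm (y (Suc k) - x k))\<^sup>2"
      using c by (intro mult_right_mono) auto
    then show ?thesis using part1[OF z, of k] by linarith
  qed
  show ?thesis
  proof (intro ballI conjI impI allI)
    fix z k assume z: "z \<in> X"
    show "(norm (x (Suc k) - z))\<^sup>2 \<le> (norm (x k - z))\<^sup>2 - (norm (y (Suc k) - x k))\<^sup>2
            + 2 * \<gamma>\<^sup>2 * (LF\<^sup>2 + (\<eta> k)\<^sup>2 * LH\<^sup>2) * (norm (y (Suc k) - x k))\<^sup>2
            + 2 * \<gamma> * ((F (y (Suc k)) + \<eta> k *\<^sub>R H (y (Suc k))) \<bullet> (z - y (Suc k)))"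
      by (rule part1[OF z])
  next
    fix z k assume z: "z \<in> X" and c: "\<forall>k. \<gamma>\<^sup>2 * (LF\<^sup>2 + (\<eta> k)\<^sup>2 * LH\<^sup>2) \<le> 1/2"
    have m: "(g k (y (Suc k)) - g k z) \<bullet> (y (Suc k) - z) \<ge> 0" by (rule mono_g[OF yX z])
    have "g k (y (Suc k)) \<bullet> (z - y (Suc k)) \<le> g k z \<bullet> (z - y (Suc k))"
      using m by (simp add: inner_diff_left inner_diff_right algebra_simps)
    then have "2 * \<gamma> * (g k (y (Suc k)) \<bullet> (z - y (Suc k))) \<le> 2 * \<gamma> * (g k z \<bullet> (z - y (Suc k)))"
      using gam by simp
    moreover have "2 * \<gamma> * (g k z \<bullet> (z - y (Suc k))) = - (2 * \<gamma> * (g k z \<bullet> (y (Suc k) - z)))"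
      by (simp add: inner_diff_right algebra_simps)
    ultimately show "2 * \<gamma> * ((F z + \<eta> k *\<^sub>R H z) \<bullet> (y (Suc k) - z))
               \<le> (norm (x k - z))\<^sup>2 - (norm (x (Suc k) - z))\<^sup>2"
      using red[OF z c[rule_format, of k]] unfolding g_def by linarith
  next
    fix z k assume z: "z \<in> X" and c: "(\<forall>k. \<gamma>\<^sup>2 * (LF\<^sup>2 + (\<eta> k)\<^sup>2 * LH\<^sup>2) \<le> 1/2)
        \<and> convex_on UNIV f
        \<and> (\<forall>w. (f has_derivative (\<lambda>h. H w \<bullet> h)) (at w))
        \<and> continuous_on UNIV H
        \<and> lipschitz_on LH UNIV H"
    let ?b = "y (Suc k)"
    have tan: "H ?b \<bullet> (z - ?b) \<le> f z - f ?b"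
      using c tangent_ineq by blast
    have mF: "(F ?b - F z) \<bullet> (?b - z) \<ge> 0" using F(2) yX z unfolding monotone_op_def by blast
    have fF: "F ?b \<bullet> (z - ?b) \<le> F z \<bullet> (z - ?b)"
      using mF by (simp add: inner_diff_left inner_diff_right algebra_simps)
    have "(F ?b + \<eta> k *\<^sub>R H ?b) \<bullet> (z - ?b) = F ?b \<bullet> (z - ?b) + \<eta> k * (H ?b \<bullet> (z - ?b))"
      by (simp add: inner_add_left)
    also have "\<dots> \<le> F z \<bullet> (z - ?b) + \<eta> k * (f z - f ?b)"
      using fF tan eta[of k] by (intro add_mono mult_left_mono) auto
    finally have "2 * \<gamma> * ((F ?b + \<eta> k *\<^sub>R H ?b) \<bullet> (z - ?b)) \<le> 2 * \<gamma> * (F z \<bullet> (z - ?b) + \<eta> k * (f z - f ?b))"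
      using gam by simp
    moreover have "2 * \<gamma> * (F z \<bullet> (z - ?b) + \<eta> k * (f z - f ?b)) = - (2 * \<gamma> * (F z \<bullet> (?b - z)) + 2 * \<gamma> * \<eta> k * (f ?b - f z))"
      by (simp add: inner_diff_right algebra_simps)
    ultimately show "2 * \<gamma> * (F z \<bullet> (?b - z)) + 2 * \<gamma> * \<eta> k * (f ?b - f z)
               \<le> (norm (x k - z))\<^sup>2 - (norm (x (Suc k) - z))\<^sup>2"
      using red[OF z, of k] c[THEN conjunct1, rule_format, of k] by linarith
  qed
qed

end
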